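(* Let $d\ge2$, let $(k_\infty,\sigma_\infty)\in\Xi^d$, and let $(k_n,\sigma_n)_{n\in\mathbb{N}}$ be a sequence in $\Xi^d$ converging to $(k_\infty,\sigma_\infty)$. Let $f\in\ell^1(\mathbb{Z}^d)$. Then the sequence $\big(\pi_{k_n,\sigma_n}(\upsilon_{k_n}(f))\big)_{n\in\mathbb{N}}$ converges to $\pi_{k_\infty,\sigma_\infty}(\upsilon_{k_\infty}(f))$ in the strong operator topology on $\ell^2(\mathbb{Z}^d)$.
   Context: $\mathbb{N}_\ast=\{2,3,\ldots\}$, $\overline{\mathbb{N}}_\ast=\mathbb{N}_\ast\cup\{\infty\}$ (one-point compactification). For $k\in\overline{\mathbb{N}}_\ast^d$: $k\mathbb{Z}^d=\prod_jk_j\mathbb{Z}$ with $\infty\mathbb{Z}=\{0\}$, $\mathbb{Z}^d_k=\mathbb{Z}^d/k\mathbb{Z}^d$, $q_k$ the canonical surjection. A skew-bicharacter of $\mathbb{Z}^d_k$ is a bicharacter $\sigma$ into the unit circle with $\sigma(n,m)=\overline{\sigma(m,n)}$, identified with its lift $\sigma\circ(q_k\times q_k)$ to $\mathbb{Z}^d$. $\Xi^d$ is the set of pairs $(k,\sigma)$ ($k\in\overline{\mathbb{N}}_\ast^d$, $\sigma$ skew-bicharacter of $\mathbb{Z}^d_k$), topologized as a subspace of $\overline{\mathbb{N}}_\ast^d\times\{\text{skew-bicharacters of }\mathbb{Z}^d\}$, product topology with pointwise convergence on the second factor. On $\ell^2(\mathbb{Z}^d_k)$ let $U^n_{k,\sigma}e_m=\sigma(m,n)e_{m-n}$,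 $\rho_{k,\sigma}(g)=\sum_ng(n)U^n_{k,\sigma}$ for $g\in\ell^1(\mathbb{Z}^d_k)$, and $C^\ast(\mathbb{Z}^d_k,\sigma)$ the norm closure. $I_k=\prod_j\{\lfloor\frac{1-k_j}{2}\rfloor,\ldots,\lfloor\frac{k_j-1}{2}\rfloor\}$ (factor $\mathbb{Z}$ if $k_j=\infty$); $\{I_k+n:n\in k\mathbb{Z}^d\}$ partitions $\mathbb{Z}^d$. $\pi_{k,\sigma}$ is the representation of $C^\ast(\mathbb{Z}^d_k,\sigma)$ on $\ell^2(\mathbb{Z}^d)$ which, for each $n\in k\mathbb{Z}^d$, leaves $H_n=\overline{\mathrm{span}}\{e_j:j\in I_k+n\}$ invariant and acts there as $W_n\rho_{k,\sigma}(\cdot)W_n^\ast$ with $W_n:\ell^2(\mathbb{Z}^d_k)\to H_n$, $W_ne_{q_k(j)}=e_{j+n}$ ($j\in I_k$). $\upsilon_k:\ell^1(\mathbb{Z}^d)\to\ell^1(\mathbb{Z}^d_k)$ is given by $\upsilon_k(f)(q_k(n))=\sum_{m\in k\mathbb{Z}^d}f(m+n)$. *)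

theory Defs
  imports "HOL-Analysis.Analysis" "HOL-Library.Extended_Nat"
begin

text \<open>Z^d is int ^ 'd (d = CARD('d)); k in (N_*-bar)^d is enat ^ 'd (infinity = the extra point).\<close>

definition in_kZ :: "enat ^ 'd \<Rightarrow> int ^ 'd \<Rightarrow> bool" where
  "in_kZ k n \<longleftrightarrow> (\<forall>j. case k $ j of enat a \<Rightarrow> int a dvd n $ j | \<infinity> \<Rightarrow> n $ j = 0)"

definition I_set :: "enat ^ 'd \<Rightarrow> (int ^ 'd) set" where
  "I_set k = {x. \<forall>j. case k $ j of
      enat a \<Rightarrow> (1 - int a) div 2 \<le> x $ j \<and> x $ j \<le> (int a - 1) div 2
    | \<infinity> \<Rightarrow> True}"

definition red :: "enat ^ 'd \<Rightarrow> int ^ 'd \<Rightarrow> int ^ 'd" where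
  "red k x = (THE r. r \<in> I_set k \<and> in_kZ k (x - r))"

text \<open>Skew-bicharacters of Z^d_k, identified with their lifts to Z^d.\<close>
definition skew_bichar :: "enat ^ 'd \<Rightarrow> (int ^ 'd \<Rightarrow> int ^ 'd \<Rightarrow> complex) \<Rightarrow> bool" where
  "skew_bichar k \<sigma> \<longleftrightarrow>
     (\<forall>m n. norm (\<sigma> m n) = 1) \<and>
     (\<forall>m m' n. \<sigma> (m + m') n = \<sigma> m n * \<sigma> m' n) \<and>
     (\<forall>m n n'. \<sigma> m (n + n') = \<sigma> m n * \<sigma> m n') \<and>
     (\<forall>m n. \<sigma> n m = cnj (\<sigma> m n)) \<and>
     (\<forall>m n p. in_kZ k p \<longrightarrow> \<sigma> (m + p) n = \<sigma> m n)"

definition Xi :: "enat ^ 'd \<Rightarrow> (int ^ 'd \<Rightarrow> int ^ 'd \<Rightarrow> complex) \<Rightarrow> bool" where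
  "Xi k \<sigma> \<longleftrightarrow> (\<forall>j. k $ j \<ge> 2) \<and> skew_bichar k \<sigma>"

text \<open>Convergence in Xi^d: coordinatewise in the one-point compactification of {2,3,...}
  and pointwise convergence of the skew-bicharacters.\<close>
definition Xi_converges ::
  "(nat \<Rightarrow> enat ^ 'd) \<Rightarrow> (nat \<Rightarrow> int ^ 'd \<Rightarrow> int ^ 'd \<Rightarrow> complex)
   \<Rightarrow> enat ^ 'd \<Rightarrow> (int ^ 'd \<Rightarrow> int ^ 'd \<Rightarrow> complex) \<Rightarrow> bool" where
  "Xi_converges ks \<sigma>s k \<sigma> \<longleftrightarrow>
     (\<forall>j. case k $ j of
        enat a \<Rightarrow> (\<forall>\<^sub>F i in sequentially. ks i $ j = enat a)
      | \<infinity> \<Rightarrow> (\<forall>M::nat. \<forall>\<^sub>F i in sequentially. ks i $ j \<ge> enat M)) \<and>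
     (\<forall>m n. (\<lambda>i. \<sigma>s i m n) \<longlonglongrightarrow> \<sigma> m n)"

text \<open>upsilon_k(f), as a (k-periodic) function on Z^d, i.e. lifted along q_k.\<close>
definition upsilon :: "enat ^ 'd \<Rightarrow> (int ^ 'd \<Rightarrow> complex) \<Rightarrow> int ^ 'd \<Rightarrow> complex" where
  "upsilon k f n = (\<Sum>\<^sub>\<infinity>m\<in>{m. in_kZ k m}. f (m + n))"

text \<open>Vectors of l^2(Z^d_k) are represented as functions on Z^d supported on I_k
  (e_{q_k(r)} corresponds to e_r, r in I_k). U^n_{k,sigma} e_m = sigma(m,n) e_{m-n}:\<close>
definition U_op :: "enat ^ 'd \<Rightarrow> (int ^ 'd \<Rightarrow> int ^ 'd \<Rightarrow> complex) \<Rightarrow> int ^ 'd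
    \<Rightarrow> (int ^ 'd \<Rightarrow> complex) \<Rightarrow> int ^ 'd \<Rightarrow> complex" where
  "U_op k \<sigma> n \<eta> r = (if r \<in> I_set k then \<sigma> (red k (r + n)) n * \<eta> (red k (r + n)) else 0)"

text \<open>rho_{k,sigma}(g) = sum over n in Z^d_k of g(n) U^n (g given by its lift to Z^d).\<close>
definition rho_op :: "enat ^ 'd \<Rightarrow> (int ^ 'd \<Rightarrow> int ^ 'd \<Rightarrow> complex) \<Rightarrow> (int ^ 'd \<Rightarrow> complex)
    \<Rightarrow> (int ^ 'd \<Rightarrow> complex) \<Rightarrow> int ^ 'd \<Rightarrow> complex" where
  "rho_op k \<sigma> g \<eta> r = (\<Sum>\<^sub>\<infinity>n\<in>I_set k. g n * U_op k \<sigma> n \<eta> r)"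

text \<open>pi_{k,sigma}(g) on l^2(Z^d): on H_n (n in kZ^d) it acts as W_n rho(g) W_n^*.\<close>
definition pi_op :: "enat ^ 'd \<Rightarrow> (int ^ 'd \<Rightarrow> int ^ 'd \<Rightarrow> complex) \<Rightarrow> (int ^ 'd \<Rightarrow> complex)
    \<Rightarrow> (int ^ 'd \<Rightarrow> complex) \<Rightarrow> int ^ 'd \<Rightarrow> complex" where
  "pi_op k \<sigma> g \<xi> x =
     (let n = x - red k x
      in rho_op k \<sigma> g (\<lambda>r. if r \<in> I_set k then \<xi> (r + n) else 0) (red k x))"

definition is_l2 :: "('a \<Rightarrow> complex) \<Rightarrow> bool" where
  "is_l2 \<xi> \<longleftrightarrow> (\<lambda>x. (norm (\<xi> x))\<^sup>2) summable_on UNIV"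

definition l2_norm :: "('a \<Rightarrow> complex) \<Rightarrow> real" where
  "l2_norm \<xi> = sqrt (\<Sum>\<^sub>\<infinity>x. (norm (\<xi> x))\<^sup>2)"

end

theory Submission
  imports Defs
begin


definition lo :: "nat \<Rightarrow> int" where "lo a = (1 - int a) div 2"
definition hi :: "nat \<Rightarrow> int" where "hi a = (int a - 1) div 2"

definition redc :: "enat \<Rightarrow> int \<Rightarrow> int" where
  "redc e z = (case e of enat a \<Rightarrow> lo a + (z - lo a) mod int a | \<infinity> \<Rightarrow> z)"

lemma hi_lo: "hi a - lo a = int a - 1"
  unfolding hi_def lo_def by presburger

lemma redc_bounds:
  assumes "a \<ge> 1"
  shows "lo a \<le> redc (enat a) z" "redc (enat a) z \<le> hi a"
proof -
  have "0 \<le> (z - lo a) mod int a" "(z - lo a) mod int a < int a" using assms by auto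
  then show "lo a \<le> redc (enat a) z" "redc (enat a) z \<le> hi a"
    using hi_lo[of a] unfolding redc_def by auto
qed

lemma redc_dvd: "int a dvd (z - redc (enat a) z)"
proof -
  have "z - redc (enat a) z = (z - lo a) - (z - lo a) mod int a" unfolding redc_def by simp
  also have "\<dots> = int a * ((z - lo a) div int a)" by (simp add: minus_mod_eq_mult_div)
  finally show ?thesis by simp
qed

lemma interval_unique:
  fixes r r' :: int
  assumes "lo a \<le> r" "r \<le> hi a" "lo a \<le> r'" "r' \<le> hi a" "int a dvd (r - r')"
  shows "r = r'"
proof -
  obtain t where t: "r - r' = int a * t" using assms(5) by (auto simp: dvd_def)
  have b: "\<bar>r - r'\<bar> < int a" using hi_lo[of a] assms(1-4) by auto
  have "t = 0"
  proof (rule ccontr)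
    assume "t \<noteq> 0"
    then have "\<bar>t\<bar> \<ge> 1" by auto
    then have "\<bar>int a * t\<bar> \<ge> int a" by (simp add: abs_mult mult_le_cancel_left1)
    with b t show False by auto
  qed
  with t show ?thesis by simp
qed

lemma redc_id:
  assumes "lo a \<le> z" "z \<le> hi a" "a \<ge> 1"
  shows "redc (enat a) z = z"
  using interval_unique[OF redc_bounds[OF assms(3)] assms(1,2), of z] redc_dvd[of a z]
  by (metis dvd_minus_iff minus_diff_eq)

definition kok :: "enat ^ 'd \<Rightarrow> bool" where "kok k \<longleftrightarrow> (\<forall>j. k $ j \<ge> 2)"

lemma kok_enat: "kok k \<Longrightarrow> k $ j = enat a \<Longrightarrow> a \<ge> 2"
  unfolding kok_def by (metis enat_ord_simps(1) numeral_eq_enat)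

lemma Xi_kok: "Xi k \<sigma> \<Longrightarrow> kok k" unfolding Xi_def kok_def by auto

definition redv :: "enat ^ 'd \<Rightarrow> int ^ 'd \<Rightarrow> int ^ 'd" where
  "redv k x = (\<chi> j. redc (k $ j) (x $ j))"

lemma redv_I: assumes "kok k" shows "redv k x \<in> I_set k"
  unfolding I_set_def
proof (intro CollectI allI)
  fix j
  show "case k $ j of enat a \<Rightarrow> (1 - int a) div 2 \<le> redv k x $ j \<and> redv k x $ j \<le> (int a - 1) div 2 | \<infinity> \<Rightarrow> True"
  proof (cases "k $ j")
    case (enat a)
    then have "a \<ge> 1" using kok_enat[OF assms] by fastforce
    then show ?thesis using enat redc_bounds[of a "x $ j"] unfolding redv_def lo_def hi_def by simp
  qed simp
qed

lemma redv_kZ: "in_kZ k (x - redv k x)"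
  unfolding in_kZ_def
proof (intro allI)
  fix j
  show "case k $ j of enat a \<Rightarrow> int a dvd (x - redv k x) $ j | \<infinity> \<Rightarrow> (x - redv k x) $ j = 0"
    using redc_dvd[of _ "x $ j"] unfolding redv_def by (cases "k $ j") (auto simp: redc_def)
qed

lemma in_kZ_iff: "in_kZ k x \<longleftrightarrow> (\<forall>j. (case k $ j of enat a \<Rightarrow> int a dvd x $ j | \<infinity> \<Rightarrow> x $ j = 0))"
  unfolding in_kZ_def ..

lemma in_kZ_diff: assumes "in_kZ k x" "in_kZ k y" shows "in_kZ k (x - y)"
  unfolding in_kZ_iff
proof
  fix j show "case k $ j of enat a \<Rightarrow> int a dvd (x - y) $ j | \<infinity> \<Rightarrow> (x - y) $ j = 0"
    using assms[unfolded in_kZ_iff, THEN spec[of _ j]] by (cases "k $ j") auto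
qed

lemma in_kZ_add: assumes "in_kZ k x" "in_kZ k y" shows "in_kZ k (x + y)"
  unfolding in_kZ_iff
proof
  fix j show "case k $ j of enat a \<Rightarrow> int a dvd (x + y) $ j | \<infinity> \<Rightarrow> (x + y) $ j = 0"
    using assms[unfolded in_kZ_iff, THEN spec[of _ j]] by (cases "k $ j") auto
qed

lemma in_kZ_uminus: assumes "in_kZ k x" shows "in_kZ k (- x)"
  unfolding in_kZ_iff
proof
  fix j show "case k $ j of enat a \<Rightarrow> int a dvd (- x) $ j | \<infinity> \<Rightarrow> (- x) $ j = 0"
    using assms[unfolded in_kZ_iff, THEN spec[of _ j]] by (cases "k $ j") auto
qed

lemma in_kZ_0: "in_kZ k 0"
  unfolding in_kZ_iff by (auto split: enat.splits)

lemma I_unique: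
  assumes "r \<in> I_set k" "r' \<in> I_set k" "in_kZ k (r - r')"
  shows "r = r'"
proof (subst vec_eq_iff, rule allI)
  fix j
  show "r $ j = r' $ j"
  proof (cases "k $ j")
    case (enat a)
    then show ?thesis using assms unfolding I_set_def in_kZ_def
      using interval_unique[of a "r $ j" "r' $ j"] unfolding lo_def hi_def
      by (auto dest!: spec[of _ j])
  next
    case infinity
    then show ?thesis using assms unfolding in_kZ_def by (auto dest!: spec[of _ j])
  qed
qed

lemma red_eq: assumes "kok k" shows "red k x = redv k x"
  unfolding red_def
proof (rule the_equality)
  show "redv k x \<in> I_set k \<and> in_kZ k (x - redv k x)" using redv_I[OF assms] redv_kZ by auto
  fix r assume "r \<in> I_set k \<and> in_kZ k (x - r)"
  then show "r = redv k x"
    using I_unique[of r k "redv k x"] redv_I[OF assms] redv_kZ[of k x] in_kZ_diff[of k "x - redv k x" "x - r"]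
    by auto
qed

lemma red_I: "kok k \<Longrightarrow> red k x \<in> I_set k" using red_eq redv_I by metis
lemma red_kZ: "kok k \<Longrightarrow> in_kZ k (x - red k x)" using red_eq redv_kZ by metis

lemma red_unique: "kok k \<Longrightarrow> r \<in> I_set k \<Longrightarrow> in_kZ k (x - r) \<Longrightarrow> red k x = r"
  using I_unique[of "red k x" k r] red_I red_kZ in_kZ_diff[of k "x - r" "x - red k x"]
  by (metis diff_diff_eq2 diff_add_cancel add_diff_cancel_left')

lemma red_cong: "kok k \<Longrightarrow> in_kZ k (x - y) \<Longrightarrow> red k x = red k y"
  using red_unique[of k "red k y" x] red_I red_kZ in_kZ_add[of k "x - y" "y - red k y"]
  by (metis add.commute diff_add_cancel add_diff_eq)

lemma red_id: "kok k \<Longrightarrow> r \<in> I_set k \<Longrightarrow> red k r = r"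
  using red_unique[of k r r] in_kZ_0[of k] by simp

lemma red_red: "kok k \<Longrightarrow> red k (red k x) = red k x"
  using red_id red_I by metis



lemma sig2: assumes "skew_bichar k \<sigma>" "in_kZ k p" shows "\<sigma> m (n + p) = \<sigma> m n"
proof -
  have sk1: "\<And>m n. \<sigma> n m = cnj (\<sigma> m n)" using assms(1) unfolding skew_bichar_def by blast
  have sk2: "\<sigma> (n + p) m = \<sigma> n m" using assms unfolding skew_bichar_def by blast
  have "\<sigma> m (n + p) = cnj (\<sigma> (n + p) m)" using sk1[of m "n + p"] by (metis complex_cnj_cnj)
  also have "\<dots> = cnj (\<sigma> n m)" using sk2 by (rule arg_cong)
  also have "\<dots> = \<sigma> m n" using sk1[of m n] by (metis complex_cnj_cnj)
  finally show ?thesis .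
qed

lemma sig2': "skew_bichar k \<sigma> \<Longrightarrow> in_kZ k (n - n') \<Longrightarrow> \<sigma> m n = \<sigma> m n'"
  using sig2[of k \<sigma> "n - n'" m n'] by simp

lemma sig_norm: "skew_bichar k \<sigma> \<Longrightarrow> norm (\<sigma> m n) = 1"
  unfolding skew_bichar_def by blast

definition w :: "enat ^ 'd \<Rightarrow> int ^ 'd \<Rightarrow> int ^ 'd \<Rightarrow> int ^ 'd" where
  "w k x a = x - red k x + red k (x + a)"

lemma w_inv: assumes "kok k" shows "w k (w k x a) (- a) = x"
proof -
  have e1: "red k (w k x a) = red k (x + a)"
    using red_cong[OF assms, of "w k x a" "red k (x + a)"] red_kZ[OF assms, of x] red_red[OF assms]
    unfolding w_def by simp
  have "in_kZ k (- (x + a - red k (x + a)) + (x - red k x))"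
    using in_kZ_add[OF in_kZ_uminus[OF red_kZ[OF assms, of "x + a"]] red_kZ[OF assms, of x]] .
  then have "in_kZ k (w k x a + - a - x)" unfolding w_def
    by (simp add: algebra_simps)
  then have e2: "red k (w k x a + - a) = red k x" using red_cong[OF assms] by blast
  show ?thesis unfolding w_def[of k "w k x a"] e1 e2 unfolding w_def by simp
qed

lemma w_bij: assumes "kok k" shows "bij (\<lambda>x. w k x a)"
proof (rule o_bij[where g = "\<lambda>x. w k x (- a)"])
  show "(\<lambda>x. w k x (- a)) \<circ> (\<lambda>x. w k x a) = id" using w_inv[OF assms] by (auto simp: fun_eq_iff)
  show "(\<lambda>x. w k x a) \<circ> (\<lambda>x. w k x (- a)) = id" using w_inv[OF assms, of _ "- a"] by (auto simp: fun_eq_iff)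
qed

lemma redc_big:
  assumes "int b \<ge> 2 * \<bar>z\<bar> + 2"
  shows "redc (enat b) z = z"
proof (rule redc_id)
  have "(1 - int b) div 2 \<le> (2 * z) div 2" using assms by (intro zdiv_mono1) auto
  then show "lo b \<le> z" unfolding lo_def by simp
  have "(2 * z) div 2 \<le> (int b - 1) div 2" using assms by (intro zdiv_mono1) auto
  then show "z \<le> hi b" unfolding hi_def by simp
  show "b \<ge> 1" using assms by linarith
qed

lemma red_conv:
  assumes conv: "Xi_converges ks \<sigma>s k \<sigma>" and ok: "\<And>i. kok (ks i)" "kok k"
  shows "eventually (\<lambda>i. red (ks i) y = red k y) sequentially"
proof -
  have "\<And>j. eventually (\<lambda>i. redc (ks i $ j) (y $ j) = redc (k $ j) (y $ j)) sequentially"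
  proof -
    fix j
    have c: "case k $ j of enat a \<Rightarrow> (\<forall>\<^sub>F i in sequentially. ks i $ j = enat a)
      | \<infinity> \<Rightarrow> (\<forall>M::nat. \<forall>\<^sub>F i in sequentially. ks i $ j \<ge> enat M)"
      using conv unfolding Xi_converges_def by auto
    show "eventually (\<lambda>i. redc (ks i $ j) (y $ j) = redc (k $ j) (y $ j)) sequentially"
    proof (cases "k $ j")
      case (enat a)
      with c have "\<forall>\<^sub>F i in sequentially. ks i $ j = enat a" by simp
      then show ?thesis by (rule eventually_mono) (simp add: enat)
    next
      case infinity
      with c have "\<forall>\<^sub>F i in sequentially. ks i $ j \<ge> enat (nat (2 * \<bar>y $ j\<bar> + 2))" by auto
      then show ?thesis
      proof (rule eventually_mono)
        fix i assume h: "ks i $ j \<ge> enat (nat (2 * \<bar>y $ j\<bar> + 2))"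
        show "redc (ks i $ j) (y $ j) = redc (k $ j) (y $ j)"
        proof (cases "ks i $ j")
          case (enat b)
          with h have "int b \<ge> 2 * \<bar>y $ j\<bar> + 2" by auto
          then have "redc (ks i $ j) (y $ j) = y $ j" using redc_big[of "y $ j" b] enat by simp
          moreover have "redc (k $ j) (y $ j) = y $ j" by (simp add: infinity redc_def)
          ultimately show ?thesis by simp
        qed (simp add: infinity redc_def)
      qed
    qed
  qed
  then have "eventually (\<lambda>i. \<forall>j. redc (ks i $ j) (y $ j) = redc (k $ j) (y $ j)) sequentially"
    by (rule eventually_all_finite)
  then show ?thesis
  proof (rule eventually_mono)
    fix i assume "\<forall>j. redc (ks i $ j) (y $ j) = redc (k $ j) (y $ j)"
    then show "red (ks i) y = red k y" unfolding red_eq[OF ok(1)] red_eq[OF ok(2)] redv_def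
      by (simp add: vec_eq_iff)
  qed
qed

lemma w_conv:
  assumes conv: "Xi_converges ks \<sigma>s k \<sigma>" and ok: "\<And>i. kok (ks i)" "kok k"
  shows "eventually (\<lambda>i. w (ks i) x a = w k x a) sequentially"
  using eventually_conj[OF red_conv[OF assms, of x] red_conv[OF assms, of "x + a"]]
  by (rule eventually_mono) (simp only: w_def)



lemma my_summable_diff:
  fixes f g :: "'a \<Rightarrow> 'b::{real_normed_vector}"
  assumes "f summable_on A" "g summable_on A"
  shows "(\<lambda>x. f x - g x) summable_on A"
  using summable_on_add[OF assms(1) summable_on_uminus[THEN iffD2, OF assms(2)]] by simp

lemma my_infsum_diff:
  fixes f g :: "'a \<Rightarrow> 'b::{real_normed_vector}"
  assumes "f summable_on A" "g summable_on A"
  shows "(\<Sum>\<^sub>\<infinity>x\<in>A. f x - g x) = infsum f A - infsum g A"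
  using infsum_add[OF assms(1) summable_on_uminus[THEN iffD2, OF assms(2)]] infsum_uminus[of g A] by simp

lemma pratt:
  fixes h g :: "nat \<Rightarrow> 'a \<Rightarrow> real" and G :: "'a \<Rightarrow> real"
  assumes h0: "\<And>i x. 0 \<le> h i x" and hg: "\<And>i x. h i x \<le> g i x"
    and hc: "\<And>x. (\<lambda>i. h i x) \<longlonglongrightarrow> 0" and gc: "\<And>x. (\<lambda>i. g i x) \<longlonglongrightarrow> G x"
    and gs: "\<And>i. g i summable_on UNIV" and Gs: "G summable_on UNIV"
    and Gsum: "(\<lambda>i. infsum (g i) UNIV) \<longlonglongrightarrow> infsum G UNIV"
  shows "(\<lambda>i. infsum (h i) UNIV) \<longlonglongrightarrow> 0"
proof (rule tendstoI)
  fix e :: real assume e: "e > 0"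
  obtain F where F: "finite F" "dist (sum G F) (infsum G UNIV) \<le> e / 4"
    using infsum_finite_approximation[OF Gs, of "e / 4"] e by auto
  have hs: "h i summable_on UNIV" for i
    using gs[of i] by (rule summable_on_comparison_test) (use hg h0 in auto)
  have lim1: "(\<lambda>i. infsum (g i) UNIV - sum (g i) F) \<longlonglongrightarrow> infsum G UNIV - sum G F"
    by (intro tendsto_diff Gsum tendsto_sum gc)
  have "infsum G UNIV - sum G F \<le> e / 4" using F(2) unfolding dist_real_def by linarith
  then have "infsum G UNIV - sum G F < e / 2" using e by linarith
  then have ev1: "eventually (\<lambda>i. infsum (g i) UNIV - sum (g i) F < e / 2) sequentially"
    using lim1 order_tendstoD(2) by blast
  have lim2: "(\<lambda>i. sum (h i) F) \<longlonglongrightarrow> 0"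
    using tendsto_sum[of F "\<lambda>x i. h i x" "\<lambda>x. 0" sequentially] hc by simp
  then have ev2: "eventually (\<lambda>i. sum (h i) F < e / 2) sequentially"
    using order_tendstoD(2)[OF lim2, of "e / 2"] e by simp
  show "eventually (\<lambda>i. dist (infsum (h i) UNIV) 0 < e) sequentially"
    using ev1 ev2
  proof eventually_elim
    case (elim i)
    have "sum (\<lambda>x. g i x - h i x) F \<le> (\<Sum>\<^sub>\<infinity>x. g i x - h i x)"
      by (rule finite_sum_le_infsum) (use my_summable_diff[OF gs hs] F(1) hg in auto)
    also have "\<dots> = infsum (g i) UNIV - infsum (h i) UNIV" by (rule my_infsum_diff[OF gs hs])
    finally have "infsum (h i) UNIV \<le> (infsum (g i) UNIV - sum (g i) F) + sum (h i) F"
      by (simp add: sum_subtractf)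
    moreover have "0 \<le> infsum (h i) UNIV" by (rule infsum_nonneg) (use h0 in auto)
    ultimately show ?case using elim by (simp add: dist_real_def)
  qed
qed

lemma cs_infsum:
  fixes p q :: "'a \<Rightarrow> real"
  assumes p0: "\<And>a. 0 \<le> p a" and ps: "p summable_on A"
    and pqs: "(\<lambda>a. p a * q a) summable_on A" and pq2s: "(\<lambda>a. p a * (q a)\<^sup>2) summable_on A"
  shows "(\<Sum>\<^sub>\<infinity>a\<in>A. p a * q a)\<^sup>2 \<le> infsum p A * (\<Sum>\<^sub>\<infinity>a\<in>A. p a * (q a)\<^sup>2)"
proof -
  define P where "P = infsum p A"
  define S where "S = (\<Sum>\<^sub>\<infinity>a\<in>A. p a * q a)"
  define Q where "Q = (\<Sum>\<^sub>\<infinity>a\<in>A. p a * (q a)\<^sup>2)"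
  have P0: "P \<ge> 0" unfolding P_def by (rule infsum_nonneg) (use p0 in auto)
  have Q0: "Q \<ge> 0" unfolding Q_def by (rule infsum_nonneg) (use p0 in auto)
  show ?thesis
  proof (cases "P = 0")
    case True
    then have "p a = 0" if "a \<in> A" for a
      using nonneg_infsum_le_0D[of p A a] ps p0 that unfolding P_def by auto
    then have "S = 0" unfolding S_def by (simp add: infsum_0)
    then show ?thesis using True unfolding S_def P_def by simp
  next
    case False
    then have Pp: "P > 0" using P0 by simp
    define t where "t = S / P"
    have s1: "(\<lambda>a. 2 * t * (p a * q a)) summable_on A" using pqs by (rule summable_on_cmult_right)
    have s2: "(\<lambda>a. t\<^sup>2 * p a) summable_on A" using ps by (rule summable_on_cmult_right)
    have "0 \<le> (\<Sum>\<^sub>\<infinity>a\<in>A. p a * (q a - t)\<^sup>2)" by (rule infsum_nonneg) (use p0 in auto)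
    also have "(\<Sum>\<^sub>\<infinity>a\<in>A. p a * (q a - t)\<^sup>2) = (\<Sum>\<^sub>\<infinity>a\<in>A. (p a * (q a)\<^sup>2 - 2 * t * (p a * q a)) + t\<^sup>2 * p a)"
      by (rule infsum_cong) (simp add: power2_eq_square algebra_simps)
    also have "\<dots> = (Q - 2 * t * S) + t\<^sup>2 * P"
      unfolding Q_def S_def P_def
      by (subst infsum_add[OF my_summable_diff[OF pq2s s1] s2], subst my_infsum_diff[OF pq2s s1])
         (simp add: infsum_cmult_right')
    also have "\<dots> = Q - S\<^sup>2 / P" using Pp unfolding t_def by (simp add: power2_eq_square field_simps)
    finally have "S\<^sup>2 / P \<le> Q" by simp
    then have "S\<^sup>2 \<le> P * Q" using Pp by (simp add: field_simps)
    then show ?thesis unfolding S_def P_def Q_def .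
  qed
qed



lemma kZ_bij:
  assumes ok: "kok k"
  shows "bij_betw (\<lambda>(n, m). m + n) (I_set k \<times> {m. in_kZ k m}) UNIV"
proof (rule bij_betwI')
  fix p q assume p: "p \<in> I_set k \<times> {m. in_kZ k m}" and q: "q \<in> I_set k \<times> {m. in_kZ k m}"
  obtain n m where pn: "p = (n, m)" by force
  obtain n' m' where qn: "q = (n', m')" by force
  have h: "n \<in> I_set k" "in_kZ k m" "n' \<in> I_set k" "in_kZ k m'" using p q pn qn by auto
  show "((case p of (n, m) \<Rightarrow> m + n) = (case q of (n, m) \<Rightarrow> m + n)) = (p = q)"
  proof
    assume e: "(case p of (n, m) \<Rightarrow> m + n) = (case q of (n, m) \<Rightarrow> m + n)"
    then have e': "m + n = m' + n'" using pn qn by simp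
    have "red k (m + n) = n" using red_unique[OF ok h(1)] h(2) by simp
    moreover have "red k (m' + n') = n'" using red_unique[OF ok h(3)] h(4) by simp
    ultimately have "n = n'" using e' by simp
    with e' have "m = m'" by simp
    with \<open>n = n'\<close> show "p = q" using pn qn by simp
  qed simp
next
  fix p assume "p \<in> I_set k \<times> {m. in_kZ k m}" then show "(case p of (n, m) \<Rightarrow> m + n) \<in> UNIV" by simp
next
  fix a :: "int ^ 'a"
  show "\<exists>p\<in>I_set k \<times> {m. in_kZ k m}. a = (case p of (n, m) \<Rightarrow> m + n)"
    using red_I[OF ok, of a] red_kZ[OF ok, of a] by (intro bexI[of _ "(red k a, a - red k a)"]) auto
qed

lemma pi_formula:
  assumes Xi: "Xi k \<sigma>"
    and f: "(\<lambda>x. norm (f x)) summable_on UNIV"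
    and B: "\<And>y. norm (\<xi> y) \<le> B"
  shows "pi_op k \<sigma> (upsilon k f) \<xi> x = (\<Sum>\<^sub>\<infinity>a. f a * (\<sigma> (red k (x + a)) a * \<xi> (w k x a)))"
proof -
  have ok: "kok k" using Xi by (rule Xi_kok)
  have sk: "skew_bichar k \<sigma>" using Xi unfolding Xi_def by blast
  define r where "r = red k x"
  define c where "c = x - r"
  define \<eta> where "\<eta> = (\<lambda>s. if s \<in> I_set k then \<xi> (s + c) else 0)"
  define h where "h = (\<lambda>a. \<sigma> (red k (x + a)) a * \<xi> (w k x a))"
  define KZ where "KZ = {m. in_kZ k m}"
  have rI: "r \<in> I_set k" unfolding r_def by (rule red_I[OF ok])
  have cZ: "in_kZ k c" unfolding c_def r_def by (rule red_kZ[OF ok])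
  have U: "U_op k \<sigma> n \<eta> r = h n" for n
  proof -
    have e1: "red k (r + n) = red k (x + n)"
    proof (rule red_cong[OF ok])
      have "(r + n) - (x + n) = - c" by (simp add: c_def)
      then show "in_kZ k (r + n - (x + n))" using in_kZ_uminus[OF cZ] by simp
    qed
    have e2: "red k (r + n) + c = w k x n" using e1 by (simp add: w_def c_def r_def)
    show ?thesis unfolding U_op_def h_def \<eta>_def using rI red_I[OF ok, of "r + n"] e1 e2 by simp
  qed
  have per: "h (m + n) = h n" if "in_kZ k m" for m n
  proof -
    have e1: "red k (x + (m + n)) = red k (x + n)"
      using red_cong[OF ok, of "x + (m + n)" "x + n"] that by (simp add: algebra_simps)
    have e2: "\<sigma> (red k (x + n)) (m + n) = \<sigma> (red k (x + n)) n"
      using sig2'[OF sk, of "m + n" n] that by simp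
    show ?thesis unfolding h_def w_def e1 e2 by simp
  qed
  have hB: "norm (h a) \<le> B" for a
    unfolding h_def using sig_norm[OF sk] B by (simp add: norm_mult)
  have Fs: "(\<lambda>a. f a * h a) summable_on UNIV"
  proof (rule abs_summable_summable)
    have "(\<lambda>a. B * norm (f a)) summable_on UNIV" using f by (rule summable_on_cmult_right)
    then show "(\<lambda>a. norm (f a * h a)) summable_on UNIV"
    proof (rule summable_on_comparison_test)
      fix a
      show "norm (f a * h a) \<le> B * norm (f a)"
        using hB[of a] mult_left_mono[of "norm (h a)" B "norm (f a)"] by (simp add: norm_mult mult.commute)
      show "0 \<le> norm (f a * h a)" by simp
    qed
  qed
  have bij: "bij_betw (\<lambda>(n, m). m + n) (I_set k \<times> KZ) UNIV" unfolding KZ_def by (rule kZ_bij[OF ok])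
  have Ps: "(\<lambda>(n, m). f (m + n) * h (m + n)) summable_on (I_set k \<times> KZ)"
    using summable_on_reindex_bij_betw[OF bij, of "\<lambda>a. f a * h a"] Fs
    by (simp add: case_prod_unfold)
  have "pi_op k \<sigma> (upsilon k f) \<xi> x = (\<Sum>\<^sub>\<infinity>n\<in>I_set k. upsilon k f n * h n)"
    unfolding pi_op_def Let_def rho_op_def r_def[symmetric] c_def[symmetric] \<eta>_def[symmetric] U ..
  also have "\<dots> = (\<Sum>\<^sub>\<infinity>n\<in>I_set k. \<Sum>\<^sub>\<infinity>m\<in>KZ. f (m + n) * h (m + n))"
  proof (rule infsum_cong)
    fix n
    have "upsilon k f n * h n = (\<Sum>\<^sub>\<infinity>m\<in>KZ. f (m + n) * h n)"
      unfolding upsilon_def KZ_def by (rule infsum_cmult_left'[symmetric])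
    also have "\<dots> = (\<Sum>\<^sub>\<infinity>m\<in>KZ. f (m + n) * h (m + n))"
      by (rule infsum_cong) (simp add: per KZ_def)
    finally show "upsilon k f n * h n = (\<Sum>\<^sub>\<infinity>m\<in>KZ. f (m + n) * h (m + n))" .
  qed
  also have "\<dots> = (\<Sum>\<^sub>\<infinity>(n, m)\<in>I_set k \<times> KZ. f (m + n) * h (m + n))"
    using infsum_Sigma_banach[OF Ps] by simp
  also have "\<dots> = (\<Sum>\<^sub>\<infinity>a. f a * h a)"
    using infsum_reindex_bij_betw[OF bij, of "\<lambda>a. f a * h a"] by (simp add: case_prod_unfold)
  finally show ?thesis unfolding h_def .
qed



lemma summable_mult_bounded:
  fixes f g :: "'a \<Rightarrow> 'b::{real_normed_div_algebra, banach}"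
  assumes f: "(\<lambda>a. norm (f a)) summable_on A" and g: "\<And>a. norm (g a) \<le> B"
  shows "(\<lambda>a. norm (f a * g a)) summable_on A" "(\<lambda>a. f a * g a) summable_on A"
proof -
  have "(\<lambda>a. B * norm (f a)) summable_on A" using f by (rule summable_on_cmult_right)
  then show *: "(\<lambda>a. norm (f a * g a)) summable_on A"
  proof (rule summable_on_comparison_test)
    fix a
    show "norm (f a * g a) \<le> B * norm (f a)"
      using g[of a] mult_left_mono[of "norm (g a)" B "norm (f a)"] by (simp add: norm_mult mult.commute)
  qed simp
  then show "(\<lambda>a. f a * g a) summable_on A" by (rule abs_summable_summable)
qed

lemma l2_bound:
  fixes f :: "'a \<Rightarrow> complex" and v :: "'a \<Rightarrow> 'b \<Rightarrow> complex"
  assumes f: "(\<lambda>a. norm (f a)) summable_on UNIV"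
    and vC: "\<And>a x. norm (v a x) \<le> C"
    and vs: "\<And>a. (\<lambda>x. (norm (v a x))\<^sup>2) summable_on UNIV"
    and vM: "\<And>a. (\<Sum>\<^sub>\<infinity>x. (norm (v a x))\<^sup>2) \<le> M"
  shows "(\<lambda>x. (norm (\<Sum>\<^sub>\<infinity>a. f a * v a x))\<^sup>2) summable_on UNIV"
    "(\<Sum>\<^sub>\<infinity>x. (norm (\<Sum>\<^sub>\<infinity>a. f a * v a x))\<^sup>2)
       \<le> (\<Sum>\<^sub>\<infinity>a. norm (f a)) * (\<Sum>\<^sub>\<infinity>a. norm (f a) * (\<Sum>\<^sub>\<infinity>x. (norm (v a x))\<^sup>2))"
proof -
  define F1 where "F1 = (\<Sum>\<^sub>\<infinity>a. norm (f a))"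
  define E where "E a = (\<Sum>\<^sub>\<infinity>x. (norm (v a x))\<^sup>2)" for a
  define Q where "Q x = (\<Sum>\<^sub>\<infinity>a. norm (f a) * (norm (v a x))\<^sup>2)" for x
  have F10: "F1 \<ge> 0" unfolding F1_def by (rule infsum_nonneg) auto
  have E0: "E a \<ge> 0" for a unfolding E_def by (rule infsum_nonneg) auto
  have C0: "C \<ge> 0" using vC[of undefined undefined] norm_ge_zero order_trans by blast
  have pw: "(norm (\<Sum>\<^sub>\<infinity>a. f a * v a x))\<^sup>2 \<le> F1 * Q x" for x
  proof -
    have s1: "(\<lambda>a. norm (f a * v a x)) summable_on UNIV"
      using summable_mult_bounded(1)[OF f, of "\<lambda>a. v a x"] vC by blast
    have "norm (\<Sum>\<^sub>\<infinity>a. f a * v a x) \<le> (\<Sum>\<^sub>\<infinity>a. norm (f a * v a x))"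
      by (rule norm_infsum_bound) (use s1 in simp)
    also have "\<dots> = (\<Sum>\<^sub>\<infinity>a. norm (f a) * norm (v a x))" by (simp add: norm_mult)
    finally have le: "norm (\<Sum>\<^sub>\<infinity>a. f a * v a x) \<le> (\<Sum>\<^sub>\<infinity>a. norm (f a) * norm (v a x))" .
    have s2: "(\<lambda>a. norm (f a) * norm (v a x)) summable_on UNIV" using s1 by (simp add: norm_mult)
    have s3: "(\<lambda>a. norm (f a) * (norm (v a x))\<^sup>2) summable_on UNIV"
    proof -
      have "norm ((norm (v a x))\<^sup>2) \<le> C\<^sup>2" for a
        using vC[of a x] by (simp add: power_mono)
      moreover have "(\<lambda>a. norm (norm (f a))) summable_on UNIV" using f by simp
      ultimately have "(\<lambda>a. norm (f a) * (norm (v a x))\<^sup>2) summable_on UNIV"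
        using summable_mult_bounded(2)[of "\<lambda>a. norm (f a)" UNIV "\<lambda>a. (norm (v a x))\<^sup>2" "C\<^sup>2"] by blast
      then show ?thesis .
    qed
    have "(norm (\<Sum>\<^sub>\<infinity>a. f a * v a x))\<^sup>2 \<le> (\<Sum>\<^sub>\<infinity>a. norm (f a) * norm (v a x))\<^sup>2"
      using le by (simp add: power_mono)
    also have "\<dots> \<le> F1 * Q x" unfolding F1_def Q_def
      by (rule cs_infsum[OF _ f s2 s3]) simp
    finally show ?thesis .
  qed
  have Phi_a: "((\<lambda>x. norm (f a) * (norm (v a x))\<^sup>2) has_sum (norm (f a) * E a)) UNIV" for a
    unfolding E_def by (rule has_sum_cmult_right) (use vs in simp)
  have pE: "(\<lambda>a. norm (f a) * E a) summable_on UNIV"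
  proof -
    have "(\<lambda>a. M * norm (f a)) summable_on UNIV" using f by (rule summable_on_cmult_right)
    then show ?thesis
    proof (rule summable_on_comparison_test)
      fix a show "norm (f a) * E a \<le> M * norm (f a)"
        using vM[of a] mult_left_mono[of "E a" M "norm (f a)"] unfolding E_def by (simp add: mult.commute)
      show "0 \<le> norm (f a) * E a" using E0 by simp
    qed
  qed
  have Ps: "(\<lambda>(a, x). norm (f a) * (norm (v a x))\<^sup>2) summable_on (UNIV \<times> UNIV)"
    using summable_on_SigmaI[where f = "\<lambda>(a, x). norm (f a) * (norm (v a x))\<^sup>2" and A = UNIV
        and B = "\<lambda>_. UNIV" and g = "\<lambda>a. norm (f a) * E a"] Phi_a pE by simp
  have Ps': "(\<lambda>(x, a). norm (f a) * (norm (v a x))\<^sup>2) summable_on (UNIV \<times> UNIV)"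
    using Ps summable_on_swap[of "\<lambda>(a, x). norm (f a) * (norm (v a x))\<^sup>2" UNIV UNIV]
    by (simp add: case_prod_unfold)
  have inner: "(\<lambda>a. norm (f a) * (norm (v a x))\<^sup>2) summable_on UNIV" for x
    using summable_on_SigmaD1[of "\<lambda>x a. norm (f a) * (norm (v a x))\<^sup>2" UNIV "\<lambda>_. UNIV" x] Ps'
    by simp
  have Qs: "Q summable_on UNIV"
    unfolding Q_def using summable_on_SigmaD[of "\<lambda>(x, a). norm (f a) * (norm (v a x))\<^sup>2" UNIV "\<lambda>_. UNIV"] Ps' inner
    by simp
  have swap: "(\<Sum>\<^sub>\<infinity>x. Q x) = (\<Sum>\<^sub>\<infinity>a. norm (f a) * E a)"
  proof -
    have "(\<Sum>\<^sub>\<infinity>a. \<Sum>\<^sub>\<infinity>x. norm (f a) * (norm (v a x))\<^sup>2) = (\<Sum>\<^sub>\<infinity>x. \<Sum>\<^sub>\<infinity>a. norm (f a) * (norm (v a x))\<^sup>2)"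
      by (rule infsum_swap_banach) (use Ps in simp)
    moreover have "(\<Sum>\<^sub>\<infinity>x. norm (f a) * (norm (v a x))\<^sup>2) = norm (f a) * E a" for a
      using Phi_a[of a] by (simp add: infsumI)
    ultimately show ?thesis unfolding Q_def by simp
  qed
  have FQs: "(\<lambda>x. F1 * Q x) summable_on UNIV" using Qs by (rule summable_on_cmult_right)
  show us: "(\<lambda>x. (norm (\<Sum>\<^sub>\<infinity>a. f a * v a x))\<^sup>2) summable_on UNIV"
    using FQs by (rule summable_on_comparison_test) (use pw in auto)
  have "(\<Sum>\<^sub>\<infinity>x. (norm (\<Sum>\<^sub>\<infinity>a. f a * v a x))\<^sup>2) \<le> (\<Sum>\<^sub>\<infinity>x. F1 * Q x)"
    by (rule infsum_mono[OF us FQs pw])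
  also have "\<dots> = F1 * (\<Sum>\<^sub>\<infinity>x. Q x)" by (rule infsum_cmult_right') 
  finally show "(\<Sum>\<^sub>\<infinity>x. (norm (\<Sum>\<^sub>\<infinity>a. f a * v a x))\<^sup>2)
       \<le> (\<Sum>\<^sub>\<infinity>a. norm (f a)) * (\<Sum>\<^sub>\<infinity>a. norm (f a) * (\<Sum>\<^sub>\<infinity>x. (norm (v a x))\<^sup>2))"
    unfolding swap F1_def E_def .
qed



lemma norm_diff_sq: "(norm (p - q :: complex))\<^sup>2 \<le> 2 * (norm p)\<^sup>2 + 2 * (norm q)\<^sup>2"
proof -
  have "norm (p - q) \<le> norm p + norm q" by (rule norm_triangle_ineq4)
  then have "(norm (p - q))\<^sup>2 \<le> (norm p + norm q)\<^sup>2" by (simp add: power_mono)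
  also have "\<dots> \<le> 2 * (norm p)\<^sup>2 + 2 * (norm q)\<^sup>2"
    using sum_squares_ge_zero[of "norm p - norm q" 0] by (simp add: power2_eq_square algebra_simps)
  finally show ?thesis .
qed

lemma l2_bounded:
  assumes "is_l2 \<xi>"
  shows "norm (\<xi> y) \<le> sqrt (\<Sum>\<^sub>\<infinity>x. (norm (\<xi> x))\<^sup>2)"
proof -
  have "sum (\<lambda>x. (norm (\<xi> x))\<^sup>2) {y} \<le> (\<Sum>\<^sub>\<infinity>x. (norm (\<xi> x))\<^sup>2)"
    by (rule finite_sum_le_infsum) (use assms in \<open>auto simp: is_l2_def\<close>)
  then show ?thesis by (simp add: real_le_rsqrt)
qed

lemma l2_iso:
  assumes "is_l2 \<xi>" "kok k"
  shows "(\<lambda>x. (norm (\<xi> (w k x a)))\<^sup>2) summable_on UNIV"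
    "(\<Sum>\<^sub>\<infinity>x. (norm (\<xi> (w k x a)))\<^sup>2) = (\<Sum>\<^sub>\<infinity>x. (norm (\<xi> x))\<^sup>2)"
  using summable_on_reindex_bij_betw[OF w_bij[OF assms(2), of a], of "\<lambda>y. (norm (\<xi> y))\<^sup>2"]
    infsum_reindex_bij_betw[OF w_bij[OF assms(2), of a], of "\<lambda>y. (norm (\<xi> y))\<^sup>2"]
    assms(1) unfolding is_l2_def by auto

theorem mainTheorem3:
  fixes ks :: "nat \<Rightarrow> enat ^ 'd"
    and \<sigma>s :: "nat \<Rightarrow> int ^ 'd \<Rightarrow> int ^ 'd \<Rightarrow> complex"
    and k :: "enat ^ 'd"
    and \<sigma> :: "int ^ 'd \<Rightarrow> int ^ 'd \<Rightarrow> complex"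
    and f :: "int ^ 'd \<Rightarrow> complex"
  assumes "CARD('d) \<ge> 2"
    and "Xi k \<sigma>"
    and "\<And>i. Xi (ks i) (\<sigma>s i)"
    and "Xi_converges ks \<sigma>s k \<sigma>"
    and "(\<lambda>x. norm (f x)) summable_on UNIV"
  shows "\<forall>\<xi>. is_l2 \<xi> \<longrightarrow>
    (\<lambda>i. l2_norm (\<lambda>x. pi_op (ks i) (\<sigma>s i) (upsilon (ks i) f) \<xi> x
                       - pi_op k \<sigma> (upsilon k f) \<xi> x)) \<longlonglongrightarrow> 0"
proof (intro allI impI)
  fix \<xi> :: "int ^ 'd \<Rightarrow> complex"
  assume l2: "is_l2 \<xi>"
  note Xi = assms(2) and Xis = assms(3) and conv = assms(4) and fs = assms(5)
  have ok: "kok k" using Xi by (rule Xi_kok)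
  have oki: "\<And>i. kok (ks i)" using Xis by (rule Xi_kok)
  have sk: "skew_bichar k \<sigma>" using Xi unfolding Xi_def by blast
  have ski: "\<And>i. skew_bichar (ks i) (\<sigma>s i)" using Xis unfolding Xi_def by blast
  define N2 where "N2 = (\<Sum>\<^sub>\<infinity>x. (norm (\<xi> x))\<^sup>2)"
  define Bx where "Bx = sqrt N2"
  have N20: "N2 \<ge> 0" unfolding N2_def by (rule infsum_nonneg) auto
  have xB: "\<And>y. norm (\<xi> y) \<le> Bx" unfolding Bx_def N2_def by (rule l2_bounded[OF l2])
  define \<phi> where "\<phi> i x a = \<sigma>s i (red (ks i) (x + a)) a * \<xi> (w (ks i) x a)" for i x a
  define \<phi>0 where "\<phi>0 x a = \<sigma> (red k (x + a)) a * \<xi> (w k x a)" for x a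
  define v where "v i a x = \<phi> i x a - \<phi>0 x a" for i a x
  have n\<phi>: "norm (\<phi> i x a) = norm (\<xi> (w (ks i) x a))" for i x a
    unfolding \<phi>_def using sig_norm[OF ski] by (simp add: norm_mult)
  have n\<phi>0: "norm (\<phi>0 x a) = norm (\<xi> (w k x a))" for x a
    unfolding \<phi>0_def using sig_norm[OF sk] by (simp add: norm_mult)
  have vB: "norm (v i a x) \<le> 2 * Bx" for i a x
    unfolding v_def using norm_triangle_ineq4[of "\<phi> i x a" "\<phi>0 x a"] n\<phi> n\<phi>0 xB[of "w (ks i) x a"] xB[of "w k x a"]
    by simp
  have v2: "(norm (v i a x))\<^sup>2 \<le> 2 * (norm (\<xi> (w (ks i) x a)))\<^sup>2 + 2 * (norm (\<xi> (w k x a)))\<^sup>2" for i a x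
    unfolding v_def using norm_diff_sq[of "\<phi> i x a" "\<phi>0 x a"] n\<phi> n\<phi>0 by simp
  define g2 where "g2 i a x = 2 * (norm (\<xi> (w (ks i) x a)))\<^sup>2 + 2 * (norm (\<xi> (w k x a)))\<^sup>2" for i a x
  have g2s: "(g2 i a) summable_on UNIV" for i a
    unfolding g2_def
    by (intro summable_on_add summable_on_cmult_right l2_iso[OF l2 oki] l2_iso[OF l2 ok])
  have g2sum: "infsum (g2 i a) UNIV = 4 * N2" for i a
    unfolding g2_def
    by (subst infsum_add, (intro summable_on_cmult_right l2_iso[OF l2 oki] l2_iso[OF l2 ok])+)
       (simp add: infsum_cmult_right' l2_iso[OF l2 oki] l2_iso[OF l2 ok] N2_def)
  have vs: "(\<lambda>x. (norm (v i a x))\<^sup>2) summable_on UNIV" for i a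
    using g2s[of i a] by (rule summable_on_comparison_test) (use v2 g2_def in auto)
  have vM: "(\<Sum>\<^sub>\<infinity>x. (norm (v i a x))\<^sup>2) \<le> 4 * N2" for i a
    using infsum_mono[OF vs g2s, of i a i a] v2 g2sum unfolding g2_def by auto
  define E where "E i a = (\<Sum>\<^sub>\<infinity>x. (norm (v i a x))\<^sup>2)" for i a
  have E0: "E i a \<ge> 0" for i a unfolding E_def by (rule infsum_nonneg) auto
  have diff: "pi_op (ks i) (\<sigma>s i) (upsilon (ks i) f) \<xi> x - pi_op k \<sigma> (upsilon k f) \<xi> x
      = (\<Sum>\<^sub>\<infinity>a. f a * v i a x)" for i x
  proof -
    have s1: "(\<lambda>a. f a * \<phi> i x a) summable_on UNIV"
      by (rule summable_mult_bounded(2)[OF fs]) (use n\<phi> xB in auto)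
    have s2: "(\<lambda>a. f a * \<phi>0 x a) summable_on UNIV"
      by (rule summable_mult_bounded(2)[OF fs]) (use n\<phi>0 xB in auto)
    have "pi_op (ks i) (\<sigma>s i) (upsilon (ks i) f) \<xi> x - pi_op k \<sigma> (upsilon k f) \<xi> x
       = (\<Sum>\<^sub>\<infinity>a. f a * \<phi> i x a) - (\<Sum>\<^sub>\<infinity>a. f a * \<phi>0 x a)"
      unfolding \<phi>_def \<phi>0_def
      using pi_formula[OF Xis fs xB] pi_formula[OF Xi fs xB] by simp
    also have "\<dots> = (\<Sum>\<^sub>\<infinity>a. f a * \<phi> i x a - f a * \<phi>0 x a)" by (rule my_infsum_diff[OF s1 s2, symmetric])
    finally show ?thesis unfolding v_def by (simp add: algebra_simps)
  qed
  define D where "D i = (\<Sum>\<^sub>\<infinity>a. norm (f a) * E i a)" for i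
  define F1 where "F1 = (\<Sum>\<^sub>\<infinity>a. norm (f a))"
  define S where "S i = (\<Sum>\<^sub>\<infinity>x. (norm (pi_op (ks i) (\<sigma>s i) (upsilon (ks i) f) \<xi> x - pi_op k \<sigma> (upsilon k f) \<xi> x))\<^sup>2)" for i
  have Sle: "S i \<le> F1 * D i" for i
    unfolding S_def diff F1_def D_def E_def
    by (rule l2_bound(2)[OF fs vB vs vM])
  have S0: "S i \<ge> 0" for i unfolding S_def by (rule infsum_nonneg) auto
  have vconv: "(\<lambda>i. v i a x) \<longlonglongrightarrow> 0" for a x
  proof -
    have ev: "eventually (\<lambda>i. \<phi> i x a = \<sigma>s i (red k (x + a)) a * \<xi> (w k x a)) sequentially"
      using eventually_conj[OF red_conv[OF conv oki ok, of "x + a"] w_conv[OF conv oki ok, of x a]]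
      by (rule eventually_mono) (simp add: \<phi>_def)
    have sc: "(\<lambda>i. \<sigma>s i (red k (x + a)) a) \<longlonglongrightarrow> \<sigma> (red k (x + a)) a"
      using conv unfolding Xi_converges_def by blast
    have "(\<lambda>i. \<sigma>s i (red k (x + a)) a * \<xi> (w k x a)) \<longlonglongrightarrow> \<phi>0 x a"
      unfolding \<phi>0_def by (intro tendsto_mult sc tendsto_const)
    then have "(\<lambda>i. \<phi> i x a) \<longlonglongrightarrow> \<phi>0 x a"
      by (rule Lim_transform_eventually) (rule eventually_mono[OF ev], simp)
    then have "(\<lambda>i. \<phi> i x a - \<phi>0 x a) \<longlonglongrightarrow> \<phi>0 x a - \<phi>0 x a" by (intro tendsto_diff tendsto_const)
    then show ?thesis unfolding v_def by simp
  qed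
  have Econv: "(\<lambda>i. E i a) \<longlonglongrightarrow> 0" for a
    unfolding E_def
  proof (rule pratt[where g = "\<lambda>i. g2 i a" and G = "\<lambda>x. 4 * (norm (\<xi> (w k x a)))\<^sup>2"])
    show "\<And>i x. 0 \<le> (norm (v i a x))\<^sup>2" by simp
    show "\<And>i x. (norm (v i a x))\<^sup>2 \<le> g2 i a x" using v2 unfolding g2_def by blast
    show "(\<lambda>i. (norm (v i a x))\<^sup>2) \<longlonglongrightarrow> 0" for x
      using tendsto_power[OF tendsto_norm[OF vconv[of a x]], of 2] by simp
    show "(\<lambda>i. g2 i a x) \<longlonglongrightarrow> 4 * (norm (\<xi> (w k x a)))\<^sup>2" for x
    proof (rule Lim_transform_eventually[OF tendsto_const])
      show "eventually (\<lambda>i. 4 * (norm (\<xi> (w k x a)))\<^sup>2 = g2 i a x) sequentially"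
        using w_conv[OF conv oki ok, of x a] by (rule eventually_mono) (simp add: g2_def)
    qed
    show "\<And>i. g2 i a summable_on UNIV" by (rule g2s)
    show "(\<lambda>x. 4 * (norm (\<xi> (w k x a)))\<^sup>2) summable_on UNIV"
      by (intro summable_on_cmult_right l2_iso[OF l2 ok])
    have "(\<Sum>\<^sub>\<infinity>x. 4 * (norm (\<xi> (w k x a)))\<^sup>2) = 4 * N2"
      by (simp add: infsum_cmult_right' l2_iso[OF l2 ok] N2_def)
    then show "(\<lambda>i. infsum (g2 i a) UNIV) \<longlonglongrightarrow> (\<Sum>\<^sub>\<infinity>x. 4 * (norm (\<xi> (w k x a)))\<^sup>2)"
      using g2sum by simp
  qed
  have Dconv: "D \<longlonglongrightarrow> 0"
    unfolding D_def
  proof (rule pratt[where g = "\<lambda>i a. 4 * N2 * norm (f a)" and G = "\<lambda>a. 4 * N2 * norm (f a)"])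
    show "\<And>i a. 0 \<le> norm (f a) * E i a" using E0 by simp
    show "norm (f a) * E i a \<le> 4 * N2 * norm (f a)" for i a
    proof -
      have e: "E i a \<le> 4 * N2" using vM[of i a] unfolding E_def .
      have "norm (f a) * E i a \<le> norm (f a) * (4 * N2)"
        by (rule mult_left_mono[OF e norm_ge_zero])
      also have "norm (f a) * (4 * N2) = 4 * N2 * norm (f a)" by (rule mult.commute)
      finally show ?thesis .
    qed
    show "(\<lambda>i. norm (f a) * E i a) \<longlonglongrightarrow> 0" for a
      using tendsto_mult[OF tendsto_const Econv[of a], of "norm (f a)"] by simp
    show "(\<lambda>i. 4 * N2 * norm (f a)) \<longlonglongrightarrow> 4 * N2 * norm (f a)" for a by simp
    show "\<And>i. (\<lambda>a. 4 * N2 * norm (f a)) summable_on UNIV" using fs by (rule summable_on_cmult_right)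
    show "(\<lambda>a. 4 * N2 * norm (f a)) summable_on UNIV" using fs by (rule summable_on_cmult_right)
    show "(\<lambda>i. \<Sum>\<^sub>\<infinity>a. 4 * N2 * norm (f a)) \<longlonglongrightarrow> (\<Sum>\<^sub>\<infinity>a. 4 * N2 * norm (f a))" by simp
  qed
  have "(\<lambda>i. F1 * D i) \<longlonglongrightarrow> F1 * 0" by (intro tendsto_mult tendsto_const Dconv)
  then have lim: "(\<lambda>i. F1 * D i) \<longlonglongrightarrow> 0" by simp
  have e1: "eventually (\<lambda>i. 0 \<le> S i) sequentially" using S0 by (intro always_eventually) blast
  have e2: "eventually (\<lambda>i. S i \<le> F1 * D i) sequentially" using Sle by (intro always_eventually) blast
  have "S \<longlonglongrightarrow> 0" by (rule tendsto_sandwich[OF e1 e2 tendsto_const lim])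
  then have "(\<lambda>i. sqrt (S i)) \<longlonglongrightarrow> sqrt 0" by (rule tendsto_real_sqrt)
  then show "(\<lambda>i. l2_norm (\<lambda>x. pi_op (ks i) (\<sigma>s i) (upsilon (ks i) f) \<xi> x
                       - pi_op k \<sigma> (upsilon k f) \<xi> x)) \<longlonglongrightarrow> 0"
    unfolding l2_norm_def S_def by simp
qed

end
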